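(* Let $\ell,D>0$, let $\mathcal A$ be a first-order $p$-SCLI and let $x^{(t)}$ denote its iterates when run with the operator $\nabla f$. Then there are constants $c_{\mathcal A},T_{\mathcal A}>0$ such that for every $T\ge T_{\mathcal A}$ there exist $f\in\mathcal F^{\mathrm{quad}}_{n,\ell,D}$, initial points $x^{(0)},\dots,x^{(-p+1)}$ of Euclidean norm at most $D$, and some $T'\in\{T,T+1,\dots,T+p-1\}$ such that $f(x^{(T')})-f(x^* )\ge\frac{c_{\mathcal A}\ell D^2}{T}$, where $x^*$ is the minimizer of $f$.
   Context: A first-order $p$-SCLI is specified by fixed real scalars $\alpha_0,\dots,\alpha_{p-1},\beta_0,\dots,\beta_{p-1}$: given $F:\mathbb R^n\to\mathbb R^n$ (here $F=\nabla f$) and initial points $x^{(0)},\dots,x^{(-p+1)}$, it generates $x^{(t)}=\sum_{j=0}^{p-1}\big(\alpha_jF(x^{(t-p+j)})+\beta_jx^{(t-p+j)}\big)$ for $t\ge1$. $\mathcal F^{\mathrm{quad}}_{n,\ell,D}$ is the class of functions $f(x)=\frac12x^\top Sx+b^\top x$ on $\mathbb R^n$ with $S$ symmetric positive definite, $\nabla f$ $\ell$-Lipschitz, and $x^*:=-S^{-1}b$ satisfying $\|x^*\|\le D$. *)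

theory Defs
  imports "HOL-Analysis.Analysis"
begin

text \<open>The state at step t is the window of the last p iterates:
  scli_window p alpha beta F init t j = x^(t - p + 1 + j) for j < p,
  where the initial points are given by init k = x^(-k) for k < p.\<close>
primrec scli_window ::
  "nat \<Rightarrow> (nat \<Rightarrow> real) \<Rightarrow> (nat \<Rightarrow> real) \<Rightarrow> ('a::real_vector \<Rightarrow> 'a)
    \<Rightarrow> (nat \<Rightarrow> 'a) \<Rightarrow> nat \<Rightarrow> nat \<Rightarrow> 'a" where
  "scli_window p alpha beta F init 0 = (\<lambda>j. init (p - 1 - j))"
| "scli_window p alpha beta F init (Suc t) =
     (\<lambda>j. if j < p - 1 then scli_window p alpha beta F init t (j + 1)
          else (\<Sum>i<p. alpha i *\<^sub>R F (scli_window p alpha beta F init t i)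
                        + beta i *\<^sub>R scli_window p alpha beta F init t i))"

definition scli_iter ::
  "nat \<Rightarrow> (nat \<Rightarrow> real) \<Rightarrow> (nat \<Rightarrow> real) \<Rightarrow> ('a::real_vector \<Rightarrow> 'a)
    \<Rightarrow> (nat \<Rightarrow> 'a) \<Rightarrow> nat \<Rightarrow> 'a" where
  "scli_iter p alpha beta F init t = scli_window p alpha beta F init t (p - 1)"

definition quad_fun :: "real^'n^'n \<Rightarrow> real^'n \<Rightarrow> real^'n \<Rightarrow> real" where
  "quad_fun S b x = (1/2) * (x \<bullet> (S *v x)) + b \<bullet> x"

definition quad_grad :: "real^'n^'n \<Rightarrow> real^'n \<Rightarrow> real^'n \<Rightarrow> real^'n" where
  "quad_grad S b x = S *v x + b"

definition quad_min :: "real^'n^'n \<Rightarrow> real^'n \<Rightarrow> real^'n" where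
  "quad_min S b = - (matrix_inv S *v b)"

definition in_Fquad :: "real \<Rightarrow> real \<Rightarrow> real^'n^'n \<Rightarrow> real^'n \<Rightarrow> bool" where
  "in_Fquad l D S b \<longleftrightarrow>
     transpose S = S \<and> (\<forall>x. x \<noteq> 0 \<longrightarrow> x \<bullet> (S *v x) > 0) \<and>
     l-lipschitz_on UNIV (quad_grad S b) \<and> norm (quad_min S b) \<le> D"

end

theory Submission
  imports Defs "HOL-Computational_Algebra.Fundamental_Theorem_Algebra"
begin

definition Qp :: "complex list \<Rightarrow> complex poly" where
  "Qp ys = (\<Prod>y\<leftarrow>ys. [:-y, 1:])"

lemma Qp_Cons: "Qp (y # ys) = [:-y,1:] * Qp ys" by (simp add: Qp_def)

lemma factorize:
  fixes R :: "complex poly"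
  shows "\<exists>ys. length ys = degree R \<and> R = smult (lead_coeff R) (Qp ys)"
proof (induction "degree R" arbitrary: R)
  case 0
  then show ?case
    by (auto simp: Qp_def intro!: exI[of _ "[]"] elim!: degree_eq_zeroE)
next
  case (Suc n)
  have "\<not> (\<exists>a l. a \<noteq> 0 \<and> l = 0 \<and> R = pCons a l)"
    using Suc(2) by auto
  from fundamental_theorem_of_algebra_alt[OF this] obtain a where "poly R a = 0" by blast
  then obtain q where q: "R = [:-a,1:] * q" using poly_eq_0_iff_dvd by (metis dvdE)
  have "q \<noteq> 0" using q Suc(2) by auto
  have "degree ([:-a,1:] * q) = degree [:-a,1:] + degree q" by (rule degree_mult_eq) (use \<open>q \<noteq> 0\<close> in auto)
  then have dq: "degree q = n" using q Suc(2) by simp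
  have lq: "lead_coeff R = lead_coeff q" unfolding q lead_coeff_mult by simp
  from Suc(1)[OF dq[symmetric]] obtain ys where ys: "length ys = degree q" "q = smult (lead_coeff q) (Qp ys)" by blast
  have "smult (lead_coeff R) (Qp (a#ys)) = [:-a,1:] * smult (lead_coeff q) (Qp ys)"
    by (simp only: Qp_Cons lq mult_smult_right)
  also have "\<dots> = R" using ys(2) q by simp
  finally show ?case
    using ys dq Suc(2) by (intro exI[of _ "a # ys"]) auto
qed

lemma coeff_lin_mult: "coeff ([:-y,1:] * q) k = (case k of 0 \<Rightarrow> 0 | Suc k' \<Rightarrow> coeff q k') - (y::complex) * coeff q k"
  by (cases k) (simp_all add: coeff_pCons)


lemma Qp_degree: "k > length ys \<Longrightarrow> coeff (Qp ys) k = 0"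
proof (induction ys arbitrary: k)
  case Nil then show ?case by (simp add: Qp_def coeff_1)
next
  case (Cons y ys)
  then show ?case by (auto simp: Qp_Cons coeff_lin_mult coeff_pCons split: nat.split)
qed

lemma Qp_top: "coeff (Qp ys) (length ys) = 1"
  by (induction ys) (auto simp: Qp_Cons coeff_lin_mult Qp_def[of "[]"] Qp_degree)

lemma Qp_T1: "coeff (Qp (y # ys)) (length ys) = - sum_list (y # ys)"
proof (induction ys arbitrary: y)
  case Nil then show ?case by (simp add: Qp_def)
next
  case (Cons w ws)
  show ?case using Cons[of w] Qp_top[of "w#ws"] Qp_degree[of "w#ws"]
    by (simp add: Qp_Cons[of y] coeff_lin_mult algebra_simps)
qed

definition e2 :: "complex list \<Rightarrow> complex" where
  "e2 ys = ((sum_list ys)^2 - sum_list (map (\<lambda>y. y^2) ys)) / 2"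

lemma e2_Cons: "e2 (y # ys) = e2 ys + y * sum_list ys"
  by (simp add: e2_def power2_eq_square field_simps)

lemma Qp_T2: "coeff (Qp (y # z # ys)) (length ys) = e2 (y # z # ys)"
proof (induction ys arbitrary: y z)
  case Nil then show ?case by (simp add: Qp_def e2_def power2_eq_square field_simps)
next
  case (Cons w ws)
  have a: "coeff (Qp (z # w # ws)) (Suc (length ws)) = -(z + w + sum_list ws)"
    using Qp_T1[of z "w#ws"] by (simp add: algebra_simps)
  show ?case unfolding Qp_Cons[of y] coeff_lin_mult
    by (simp add: a Cons[of z w] e2_Cons algebra_simps)
qed

lemma Qp_bound:
  assumes "\<And>y. y \<in> set ys \<Longrightarrow> cmod y \<le> W" "W \<ge> 0"
  shows "cmod (coeff (Qp ys) k) \<le> (1 + W) ^ length ys"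
  using assms
proof (induction ys arbitrary: k)
  case Nil then show ?case by (simp add: Qp_def coeff_1)
next
  case (Cons y ys)
  have h1: "cmod (case k of 0 \<Rightarrow> 0 | Suc k' \<Rightarrow> coeff (Qp ys) k') \<le> (1 + W) ^ length ys"
    using Cons by (auto split: nat.split)
  have h2: "cmod (y * coeff (Qp ys) k) \<le> W * (1 + W) ^ length ys"
    unfolding norm_mult using Cons by (intro mult_mono) auto
  have "cmod (coeff (Qp (y#ys)) k) \<le> (1 + W) ^ length ys + W * (1 + W) ^ length ys"
    unfolding Qp_Cons coeff_lin_mult using h1 h2 by (meson norm_triangle_le_diff add_mono order_trans)
  then show ?case by (simp add: algebra_simps)
qed

lemma lst_norm: "cmod (sum_list (map f ys)) \<le> sum_list (map (\<lambda>y. cmod (f y)) ys)"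
  by (induction ys) (auto intro: order_trans[OF norm_triangle_ineq])

lemma lst_Re: "Re (sum_list (map f ys)) = sum_list (map (\<lambda>y. Re (f y)) ys)"
  by (induction ys) auto

lemma lst_mem: "(\<And>y. y \<in> set ys \<Longrightarrow> 0 \<le> (g y::real)) \<Longrightarrow> y \<in> set ys \<Longrightarrow> g y \<le> sum_list (map g ys)"
proof (induction ys)
  case Nil then show ?case by simp
next
  case (Cons x xs)
  have "0 \<le> sum_list (map g xs)" using Cons by (intro sum_list_nonneg) auto
  moreover have "0 \<le> g x" using Cons by auto
  ultimately show ?case using Cons by (cases "y = x") force+
qed

lemma lst_const_le: "(\<And>y. y \<in> set ys \<Longrightarrow> (g y::real) \<le> W) \<Longrightarrow> sum_list (map g ys) \<le> real (length ys) * W"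
proof (induction ys)
  case Nil then show ?case by simp
next
  case (Cons x xs)
  then have "g x \<le> W" "sum_list (map g xs) \<le> real (length xs) * W" by auto
  then show ?case by (simp add: algebra_simps)
qed

lemma half_bound:
  fixes c a l :: real
  assumes "0 < l" "l \<le> \<bar>c\<bar> / (2 * (\<bar>a\<bar> + 1))"
  shows "\<bar>c - l * a\<bar> \<ge> \<bar>c\<bar> / 2"
proof -
  have "l * \<bar>a\<bar> \<le> \<bar>c\<bar> / (2 * (\<bar>a\<bar> + 1)) * \<bar>a\<bar>" using assms by (intro mult_right_mono) auto
  also have "\<dots> \<le> \<bar>c\<bar> / 2" by (simp add: field_simps)
  finally have "l * \<bar>a\<bar> \<le> \<bar>c\<bar> / 2" .
  moreover have "\<bar>l * a\<bar> = l * \<bar>a\<bar>" using assms by (simp add: abs_mult)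
  ultimately show ?thesis by linarith
qed

lemma bad_root_bound:
  assumes "2 * Re y \<le> -1 - s * (cmod y)^2" "s > 0"
  shows "cmod y \<le> 2 / s" "s * (cmod y)^2 \<le> - 2 * Re y" "Re y \<le> -1/2"
proof -
  show "s * (cmod y)^2 \<le> - 2 * Re y" using assms by linarith
  have "s * (cmod y)^2 \<ge> 0" using assms by simp
  then show "Re y \<le> -1/2" using assms by linarith
  have "s * (cmod y)^2 \<le> 2 * cmod y" using assms abs_Re_le_cmod[of y] by linarith
  then have "s * cmod y * cmod y \<le> 2 * cmod y" by (simp add: power2_eq_square mult.assoc)
  then show "cmod y \<le> 2 / s"
    using assms by (cases "cmod y = 0") (auto simp: field_simps)
qed

definition coeffs_ok :: "nat \<Rightarrow> (nat \<Rightarrow> real) \<Rightarrow> (nat \<Rightarrow> real) \<Rightarrow> real \<Rightarrow> complex list \<Rightarrow> bool" where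
  "coeffs_ok p c a l ys \<longleftrightarrow> length ys = p \<and>
     (\<forall>k. 1 \<le> k \<and> k \<le> p \<longrightarrow> coeff (Qp ys) (p - k) = complex_of_real ((c k - l * a k) / (- l * a 0)))"

lemma coeff_norm:
  assumes "coeffs_ok p c a l ys" "1 \<le> k" "k \<le> p" "l > 0" "a 0 \<noteq> 0"
  shows "cmod (coeff (Qp ys) (p - k)) * (l * \<bar>a 0\<bar>) = \<bar>c k - l * a k\<bar>"
proof -
  have "coeff (Qp ys) (p - k) = complex_of_real ((c k - l * a k) / (- l * a 0))"
    using assms unfolding coeffs_ok_def by auto
  then have "cmod (coeff (Qp ys) (p - k)) = \<bar>(c k - l * a k) / (- l * a 0)\<bar>"
    by (simp only: norm_of_real)
  also have "\<dots> = \<bar>c k - l * a k\<bar> / (l * \<bar>a 0\<bar>)"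
    using assms(4) by (simp add: abs_mult)
  finally show "cmod (coeff (Qp ys) (p - k)) * (l * \<bar>a 0\<bar>) = \<bar>c k - l * a k\<bar>"
    using assms(4,5) by (auto simp: field_simps)
qed

lemma case_m1:
  fixes c a :: "nat \<Rightarrow> real"
  assumes "p \<ge> 1" "c 1 \<noteq> 0" "a 0 \<noteq> 0"
  shows "\<exists>K>0. \<exists>l0>0. \<forall>l ys. 0 < l \<and> l \<le> l0 \<and> coeffs_ok p c a l ys \<and>
           (\<forall>y\<in>set ys. 2 * Re y \<le> -1 - K * l * (cmod y)^2) \<longrightarrow> False"
proof -
  define K where "K = 4 * p * \<bar>a 0\<bar> / \<bar>c 1\<bar> + 1"
  define l0 where "l0 = \<bar>c 1\<bar> / (2 * (\<bar>a 1\<bar> + 1))"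
  have K0: "K > 0" unfolding K_def using assms by (simp add: add_nonneg_pos)
  have l00: "l0 > 0" unfolding l0_def using assms by (simp add: add_nonneg_pos)
  have "False" if H: "0 < l" "l \<le> l0" "coeffs_ok p c a l ys" "\<forall>y\<in>set ys. 2 * Re y \<le> -1 - K * l * (cmod y)^2" for l ys
  proof -
    define s where "s = K * l"
    have s0: "s > 0" using K0 H by (simp add: s_def)
    have yb: "cmod y \<le> 2 / s" if "y \<in> set ys" for y
      using bad_root_bound(1)[OF _ s0] H(4) that by (simp add: s_def)
    have len: "length ys = p" using H(3) by (simp add: coeffs_ok_def)
    then obtain y0 ys' where ys: "ys = y0 # ys'" using assms(1) by (cases ys) auto
    have "p - 1 = length ys'" using len ys by simp
    then have "coeff (Qp ys) (p - 1) = - sum_list ys" using Qp_T1[of y0 ys'] ys by simp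
    then have X: "cmod (sum_list ys) * (l * \<bar>a 0\<bar>) = \<bar>c 1 - l * a 1\<bar>"
      using coeff_norm[OF H(3), of 1] H(1) assms by simp
    have "cmod (sum_list ys) \<le> real p * (2 / s)"
      using lst_norm[of "\<lambda>y. y" ys] lst_const_le[of ys "\<lambda>y. cmod y" "2/s"] yb len by simp
    then have "cmod (sum_list ys) * (l * \<bar>a 0\<bar>) \<le> real p * (2 / s) * (l * \<bar>a 0\<bar>)"
      using H(1) by (intro mult_right_mono) auto
    also have "\<dots> = 2 * p * \<bar>a 0\<bar> / K" using H(1) K0 by (simp add: s_def field_simps)
    finally have "\<bar>c 1\<bar> / 2 \<le> 2 * p * \<bar>a 0\<bar> / K"
      using X half_bound[OF H(1), of "c 1" "a 1"] H(2) l0_def by linarith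
    then have "\<bar>c 1\<bar> * K \<le> 4 * p * \<bar>a 0\<bar>" using K0 by (simp add: field_simps)
    moreover have "\<bar>c 1\<bar> * K = 4 * p * \<bar>a 0\<bar> + \<bar>c 1\<bar>" unfolding K_def using assms by (simp add: field_simps)
    ultimately show False using assms by simp
  qed
  then show ?thesis using K0 l00 by blast
qed

lemma lst_cmult: "sum_list (map (\<lambda>y. (r::real) * g y) ys) = r * sum_list (map g ys)"
  by (induction ys) (auto simp: algebra_simps)

lemma lst_diff: "sum_list (map (\<lambda>y. (f y::real) - g y) ys) = sum_list (map f ys) - sum_list (map g ys)"
  by (induction ys) (auto simp: algebra_simps)

lemma case_m2:
  fixes c a :: "nat \<Rightarrow> real"
  assumes "p \<ge> 2" "c 1 = 0" "c 2 \<noteq> 0" "a 0 \<noteq> 0"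
  shows "\<exists>K>0. \<exists>l0>0. \<forall>l ys. 0 < l \<and> l \<le> l0 \<and> coeffs_ok p c a l ys \<and>
           (\<forall>y\<in>set ys. 2 * Re y \<le> -1 - K * l * (cmod y)^2) \<longrightarrow> False"
proof -
  define B where "B = \<bar>a 1\<bar> / \<bar>a 0\<bar>"
  define K where "K = 4 * B * \<bar>a 0\<bar> / \<bar>c 2\<bar> + 1"
  define l0 where "l0 = min (\<bar>c 2\<bar> / (2 * (\<bar>a 2\<bar> + 1))) (\<bar>c 2\<bar> / (2 * \<bar>a 0\<bar> * (B^2 + 1)))"
  have B0: "B \<ge> 0" unfolding B_def by simp
  have K0: "K > 0" unfolding K_def using assms B0 by (simp add: add_nonneg_pos)
  have l00: "l0 > 0" unfolding l0_def using assms by (simp add: add_nonneg_pos add_pos_nonneg)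
  have "False" if H: "0 < l" "l \<le> l0" "coeffs_ok p c a l ys" "\<forall>y\<in>set ys. 2 * Re y \<le> -1 - K * l * (cmod y)^2" for l ys
  proof -
    define s where "s = K * l"
    have s0: "s > 0" using K0 H by (simp add: s_def)
    have yb: "s * (cmod y)^2 \<le> - 2 * Re y" if "y \<in> set ys" for y
    proof -
      have "2 * Re y \<le> -1 - s * (cmod y)^2" using H(4) that by (simp add: s_def)
      from bad_root_bound(2)[OF this s0] show ?thesis .
    qed
    have len: "length ys = p" using H(3) by (simp add: coeffs_ok_def)
    then obtain y0 y1 ys' where ys: "ys = y0 # y1 # ys'" using assms(1)
      by (metis Suc_le_length_iff numeral_2_eq_2)
    define S where "S = sum_list ys"
    define sq where "sq = sum_list (map (\<lambda>y. (cmod y)^2) ys)"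
    have "p - 1 = length (y1 # ys')" using len ys by simp
    then have "coeff (Qp ys) (p - 1) = - S" using Qp_T1[of y0 "y1#ys'"] ys S_def by simp
    then have "cmod S * (l * \<bar>a 0\<bar>) = \<bar>c 1 - l * a 1\<bar>"
      using coeff_norm[OF H(3), of 1] H(1) assms by simp
    then have "cmod S * (l * \<bar>a 0\<bar>) = l * \<bar>a 1\<bar>" using assms H(1) by (simp add: abs_mult)
    then have SB: "cmod S = B" unfolding B_def using H(1) assms by (simp add: field_simps)
    have "sum_list (map (\<lambda>y. s * (cmod y)^2) ys) \<le> sum_list (map (\<lambda>y. - 2 * Re y) ys)"
      using yb by (intro sum_list_mono) auto
    then have "s * sq \<le> - 2 * Re S"
      unfolding sq_def S_def using lst_cmult[of s "\<lambda>y. (cmod y)^2" ys] lst_cmult[of "-2" "\<lambda>y. Re y" ys]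
        lst_Re[of "\<lambda>y. y" ys] by simp
    also have "\<dots> \<le> 2 * B" using SB abs_Re_le_cmod[of S] by linarith
    finally have sqb: "s * sq \<le> 2 * B" .
    have "p - 2 = length ys'" using len ys by simp
    then have "coeff (Qp ys) (p - 2) = e2 ys" using Qp_T2[of y0 y1 ys'] ys by simp
    then have E: "cmod (e2 ys) * (l * \<bar>a 0\<bar>) = \<bar>c 2 - l * a 2\<bar>"
      using coeff_norm[OF H(3), of 2] H(1) assms by simp
    have "cmod (sum_list (map (\<lambda>y. y^2) ys)) \<le> sq"
      using lst_norm[of "\<lambda>y. y^2" ys] unfolding sq_def by (simp add: norm_power)
    then have "cmod (e2 ys) \<le> (B^2 + sq) / 2"
      unfolding e2_def S_def[symmetric] using SB
      by (auto simp: norm_divide norm_power intro!: divide_right_mono order_trans[OF norm_triangle_ineq4])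
    then have "cmod (e2 ys) * (l * \<bar>a 0\<bar>) \<le> (B^2 + sq) / 2 * (l * \<bar>a 0\<bar>)"
      using H(1) by (intro mult_right_mono) auto
    also have "\<dots> = B^2 * l * \<bar>a 0\<bar> / 2 + (s * sq) * \<bar>a 0\<bar> / (2 * K)"
      using K0 by (simp add: s_def field_simps)
    also have "\<dots> \<le> B^2 * l * \<bar>a 0\<bar> / 2 + (2 * B) * \<bar>a 0\<bar> / (2 * K)"
      using sqb K0 by (intro add_left_mono divide_right_mono mult_right_mono) auto
    finally have M0: "\<bar>c 2 - l * a 2\<bar> \<le> B^2 * l * \<bar>a 0\<bar> / 2 + B * \<bar>a 0\<bar> / K"
      using E by simp
    have "l \<le> \<bar>c 2\<bar> / (2 * (\<bar>a 2\<bar> + 1))" using H(2) l0_def by simp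
    from half_bound[OF H(1) this] M0 have M: "\<bar>c 2\<bar> / 2 \<le> B^2 * l * \<bar>a 0\<bar> / 2 + B * \<bar>a 0\<bar> / K"
      by linarith
    have "B^2 * l * \<bar>a 0\<bar> \<le> B^2 * (\<bar>c 2\<bar> / (2 * \<bar>a 0\<bar> * (B^2 + 1))) * \<bar>a 0\<bar>"
      using H(2) unfolding l0_def by (intro mult_right_mono mult_left_mono) auto
    also have "\<dots> = \<bar>c 2\<bar> / 2 * (B^2 / (B^2 + 1))"
    proof -
      have "B^2 + 1 > 0" by (simp add: add_nonneg_pos)
      then show ?thesis using assms by (simp add: divide_simps)
    qed
    also have "\<dots> < \<bar>c 2\<bar> / 2"
    proof -
      have "B^2 / (B^2 + 1) < 1" by (simp add: add_nonneg_pos)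
      moreover have "\<bar>c 2\<bar> / 2 > 0" using assms by simp
      ultimately show ?thesis by (metis mult.right_neutral mult_strict_left_mono)
    qed
    finally have M1: "B^2 * l * \<bar>a 0\<bar> < \<bar>c 2\<bar> / 2" .
    have "\<bar>c 2\<bar> * K = 4 * B * \<bar>a 0\<bar> + \<bar>c 2\<bar>" unfolding K_def using assms by (simp add: field_simps)
    then have "B * \<bar>a 0\<bar> / K < \<bar>c 2\<bar> / 4" using K0 assms by (simp add: field_simps)
    then show False using M M1 by linarith
  qed
  then show ?thesis using K0 l00 by blast
qed

lemma case_m3:
  fixes c a :: "nat \<Rightarrow> real"
  assumes "3 \<le> m" "m \<le> p" "c 1 = 0" "c 2 = 0" "c m \<noteq> 0" "a 0 \<noteq> 0"
  shows "\<exists>K>0. \<exists>l0>0. \<forall>l ys. 0 < l \<and> l \<le> l0 \<and> coeffs_ok p c a l ys \<and>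
           (\<forall>y\<in>set ys. 2 * Re y \<le> -1 - K * l * (cmod y)^2) \<longrightarrow> False"
proof -
  define B where "B = \<bar>a 1\<bar> / \<bar>a 0\<bar>"
  define G where "G = B^2 + 2 * (\<bar>a 2\<bar> / \<bar>a 0\<bar>)"
  define Y2 where "Y2 = B^2 + real p * B^2 + G"
  define W where "W = 1 + Y2"
  define l0 where "l0 = min (\<bar>c m\<bar> / (2 * (\<bar>a m\<bar> + 1))) (\<bar>c m\<bar> / (4 * \<bar>a 0\<bar> * (1 + W)^p))"
  have B0: "B \<ge> 0" unfolding B_def by simp
  have G0: "G \<ge> 0" unfolding G_def by simp
  have W0: "W \<ge> 0" unfolding W_def Y2_def using B0 G0 by simp
  have l00: "l0 > 0" unfolding l0_def using assms W0 by (simp add: add_nonneg_pos)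
  have "False" if H: "0 < l" "l \<le> l0" "coeffs_ok p c a l ys" "\<forall>y\<in>set ys. 2 * Re y \<le> -1 - 1 * l * (cmod y)^2" for l ys
  proof -
    have yb: "Re y \<le> -1/2" if "y \<in> set ys" for y
    proof -
      have "2 * Re y \<le> -1 - l * (cmod y)^2" using H(4) that by simp
      from bad_root_bound(3)[OF this H(1)] show ?thesis .
    qed
    have len: "length ys = p" using H(3) by (simp add: coeffs_ok_def)
    then obtain y0 y1 ys' where ys: "ys = y0 # y1 # ys'" using assms(1,2)
      by (metis Suc_le_length_iff numeral_2_eq_2 le_trans numeral_le_iff semiring_norm(72) numeral_3_eq_3 le_SucE)
    define S where "S = sum_list ys"
    define Sq where "Sq = sum_list (map (\<lambda>y. y^2) ys)"
    have "p - 1 = length (y1 # ys')" using len ys by simp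
    then have "coeff (Qp ys) (p - 1) = - S" using Qp_T1[of y0 "y1#ys'"] ys S_def by simp
    then have "cmod S * (l * \<bar>a 0\<bar>) = \<bar>c 1 - l * a 1\<bar>"
      using coeff_norm[OF H(3), of 1] H(1) assms by simp
    then have "cmod S * (l * \<bar>a 0\<bar>) = l * \<bar>a 1\<bar>" using assms H(1) by (simp add: abs_mult)
    then have SB: "cmod S = B" unfolding B_def using H(1) assms by (simp add: field_simps)
    have "p - 2 = length ys'" using len ys by simp
    then have "coeff (Qp ys) (p - 2) = e2 ys" using Qp_T2[of y0 y1 ys'] ys by simp
    then have "cmod (e2 ys) * (l * \<bar>a 0\<bar>) = \<bar>c 2 - l * a 2\<bar>"
      using coeff_norm[OF H(3), of 2] H(1) assms by simp
    then have "cmod (e2 ys) * (l * \<bar>a 0\<bar>) = l * \<bar>a 2\<bar>" using assms H(1) by (simp add: abs_mult)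
    then have E2: "cmod (e2 ys) = \<bar>a 2\<bar> / \<bar>a 0\<bar>" using H(1) assms by (simp add: field_simps)
    have "Sq = S^2 - 2 * e2 ys" unfolding e2_def S_def Sq_def by (simp add: field_simps)
    then have "cmod Sq \<le> cmod (S^2) + cmod (2 * e2 ys)" using norm_triangle_ineq4[of "S^2" "2 * e2 ys"] by simp
    then have SqG: "cmod Sq \<le> G" unfolding G_def using SB E2 by (simp add: norm_power norm_mult)
    have nn: "0 \<le> - Re y" if "y \<in> set ys" for y using yb[OF that] by simp
    have "sum_list (map (\<lambda>y. - Re y) ys) = - Re S"
      using lst_Re[of "\<lambda>y. y" ys] lst_cmult[of "-1" "\<lambda>y. Re y" ys] S_def by simp
    also have "\<dots> \<le> B" using SB abs_Re_le_cmod[of S] by linarith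
    finally have sumRe: "sum_list (map (\<lambda>y. - Re y) ys) \<le> B" .
    have Reb: "(Re y)^2 \<le> B^2" if "y \<in> set ys" for y
    proof -
      have "- Re y \<le> B" using lst_mem[of ys "\<lambda>y. - Re y" y] nn that sumRe by force
      then have "\<bar>Re y\<bar> \<le> B" using nn[OF that] by simp
      then show ?thesis by (metis abs_ge_zero power2_abs power_mono)
    qed
    have "sum_list (map (\<lambda>y. (Im y)^2) ys) = sum_list (map (\<lambda>y. (Re y)^2 - Re (y^2)) ys)"
      by (intro arg_cong[where f = sum_list] map_cong) (auto simp: power2_eq_square)
    also have "\<dots> = sum_list (map (\<lambda>y. (Re y)^2) ys) - Re Sq"
      unfolding Sq_def using lst_diff[of "\<lambda>y. (Re y)^2" "\<lambda>y. Re (y^2)" ys] lst_Re[of "\<lambda>y. y^2" ys] by simp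
    also have "\<dots> \<le> real p * B^2 + G"
      using lst_const_le[of ys "\<lambda>y. (Re y)^2" "B^2"] Reb len SqG abs_Re_le_cmod[of Sq] by force
    finally have sumIm: "sum_list (map (\<lambda>y. (Im y)^2) ys) \<le> real p * B^2 + G" .
    have yW: "cmod y \<le> W" if "y \<in> set ys" for y
    proof -
      have "(Im y)^2 \<le> real p * B^2 + G" using lst_mem[of ys "\<lambda>y. (Im y)^2" y] that sumIm by force
      then have "(cmod y)^2 \<le> Y2" using Reb[OF that] unfolding Y2_def cmod_power2 by linarith
      moreover have "cmod y \<le> 1 + (cmod y)^2"
      proof -
        have "0 \<le> (cmod y - 1)^2" by simp
        then have "2 * cmod y \<le> (cmod y)^2 + 1" unfolding power2_diff by simp
        moreover have "0 \<le> cmod y" by simp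
        ultimately show ?thesis by linarith
      qed
      ultimately show ?thesis unfolding W_def by linarith
    qed
    have CB: "cmod (coeff (Qp ys) (p - m)) \<le> (1 + W) ^ p"
      using Qp_bound[of ys W "p - m"] yW W0 len by simp
    have CE: "cmod (coeff (Qp ys) (p - m)) * (l * \<bar>a 0\<bar>) = \<bar>c m - l * a m\<bar>"
      using coeff_norm[OF H(3), of m] H(1) assms by simp
    have "l \<le> \<bar>c m\<bar> / (2 * (\<bar>a m\<bar> + 1))" using H(2) l0_def by simp
    from half_bound[OF H(1) this] CE have "\<bar>c m\<bar> / 2 \<le> cmod (coeff (Qp ys) (p - m)) * (l * \<bar>a 0\<bar>)" by simp
    also have "\<dots> \<le> (1 + W) ^ p * (l * \<bar>a 0\<bar>)" using CB H(1) by (intro mult_right_mono) auto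
    also have "\<dots> \<le> (1 + W) ^ p * ((\<bar>c m\<bar> / (4 * \<bar>a 0\<bar> * (1 + W)^p)) * \<bar>a 0\<bar>)"
      using H(2) W0 unfolding l0_def by (intro mult_left_mono mult_right_mono) auto
    also have "\<dots> = \<bar>c m\<bar> / 4"
    proof -
      have "(1 + W) ^ p > 0" "1 + W \<noteq> 0" using W0 by simp_all
      then show ?thesis using assms by (simp add: divide_simps)
    qed
    finally show False using assms by simp
  qed
  then have "\<forall>l ys. 0 < l \<and> l \<le> l0 \<and> coeffs_ok p c a l ys \<and>
           (\<forall>y\<in>set ys. 2 * Re y \<le> -1 - 1 * l * (cmod y)^2) \<longrightarrow> False" by blast
  then show ?thesis using l00 by (intro exI[of _ "1::real"]) auto
qed

lemma crux_list:
  fixes c a :: "nat \<Rightarrow> real"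
  assumes "p \<ge> 1" "c p \<noteq> 0" "a 0 \<noteq> 0"
  shows "\<exists>K>0. \<exists>l0>0. \<forall>l ys. 0 < l \<and> l \<le> l0 \<and> coeffs_ok p c a l ys \<and>
           (\<forall>y\<in>set ys. 2 * Re y \<le> -1 - K * l * (cmod y)^2) \<longrightarrow> False"
proof -
  define m where "m = (LEAST k. 1 \<le> k \<and> c k \<noteq> 0)"
  have m1: "1 \<le> m \<and> c m \<noteq> 0" unfolding m_def by (rule LeastI[of _ p]) (use assms in auto)
  have mp: "m \<le> p" unfolding m_def by (rule Least_le) (use assms in auto)
  have mz: "c k = 0" if "1 \<le> k" "k < m" for k
    using not_less_Least[of k "\<lambda>k. 1 \<le> k \<and> c k \<noteq> 0"] that unfolding m_def by auto
  consider "m = 1" | "m = 2" | "m \<ge> 3" using m1 by linarith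
  then show ?thesis
  proof cases
    case 1 then show ?thesis using case_m1[of p c a] assms m1 by simp
  next
    case 2 then show ?thesis using case_m2[of p c a] assms m1 mp mz[of 1] by simp
  next
    case 3 then show ?thesis using case_m3[of m p c a] assms m1 mp mz[of 1] mz[of 2] by simp
  qed
qed

lemma binom_expand:
  fixes w :: complex and cf :: "nat \<Rightarrow> real"
  shows "(\<Sum>k\<le>p. complex_of_real (real (p choose k) - (\<Sum>i<p. cf i * real (i choose k))) * w^k)
       = (1 + w)^p - (\<Sum>i<p. complex_of_real (cf i) * (1 + w)^i)"
proof -
  have bin: "(1 + w)^n = (\<Sum>k\<le>n. of_nat (n choose k) * w^k)" for n
    using binomial_ring[of w 1 n] by (simp add: add.commute)
  have bin2: "(1 + w)^i = (\<Sum>k\<le>p. of_nat (i choose k) * w^k)" if "i < p" for i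
    unfolding bin using that by (intro sum.mono_neutral_left) auto
  have "(\<Sum>k\<le>p. complex_of_real (real (p choose k) - (\<Sum>i<p. cf i * real (i choose k))) * w^k)
      = (\<Sum>k\<le>p. of_nat (p choose k) * w^k) - (\<Sum>k\<le>p. \<Sum>i<p. complex_of_real (cf i) * (of_nat (i choose k) * w^k))"
    by (simp add: sum_subtractf sum_distrib_right algebra_simps) (simp add: sum_distrib_left algebra_simps)
  also have "(\<Sum>k\<le>p. \<Sum>i<p. complex_of_real (cf i) * (of_nat (i choose k) * w^k))
      = (\<Sum>i<p. complex_of_real (cf i) * (\<Sum>k\<le>p. of_nat (i choose k) * w^k))"
    by (subst sum.swap) (simp add: sum_distrib_left)
  also have "\<dots> = (\<Sum>i<p. complex_of_real (cf i) * (1 + w)^i)"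
    using bin2 by simp
  finally show ?thesis using bin[of p] by simp
qed

lemma Qp_root: "y \<in> set ys \<Longrightarrow> poly (Qp ys) y = 0"
  by (induction ys) (auto simp: Qp_Cons)

lemma root_exists:
  fixes \<alpha> \<beta> :: "nat \<Rightarrow> real"
  assumes p1: "p \<ge> 1" and sb: "(\<Sum>i<p. \<beta> i) = 1"
  shows "\<exists>K>0. \<exists>l0>0. \<forall>l. 0 < l \<and> l \<le> l0 \<longrightarrow>
    (\<exists>z::complex. z^p = (\<Sum>i<p. complex_of_real (\<alpha> i * l + \<beta> i) * z^i) \<and> 1 - K * l \<le> (cmod z)^2)"
proof (cases "(\<Sum>i<p. \<alpha> i) = 0")
  case True
  have "(\<Sum>i<p. complex_of_real (\<alpha> i * l + \<beta> i)) = 1" for l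
  proof -
    have "(\<Sum>i<p. complex_of_real (\<alpha> i * l + \<beta> i)) = complex_of_real ((\<Sum>i<p. \<alpha> i) * l + (\<Sum>i<p. \<beta> i))"
      by (simp add: sum_distrib_right sum.distrib)
    then show ?thesis using True sb by simp
  qed
  then show ?thesis by (intro exI[of _ "1::real"] conjI allI impI exI[of _ "1::complex"]) auto
next
  case False
  define c where "c k = real (p choose k) - (\<Sum>i<p. \<beta> i * real (i choose k))" for k
  define a where "a k = (\<Sum>i<p. \<alpha> i * real (i choose k))" for k
  have c0: "c 0 = 0" unfolding c_def using sb by simp
  have cp: "c p = 1" unfolding c_def by (simp add: binomial_eq_0)
  have a0: "a 0 \<noteq> 0" unfolding a_def using False by simp
  have ap: "a p = 0" unfolding a_def by (simp add: binomial_eq_0)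
  obtain K l0 where K: "K > 0" "l0 > 0" and KL: "\<forall>l ys. 0 < l \<and> l \<le> l0 \<and> coeffs_ok p c a l ys \<and>
           (\<forall>y\<in>set ys. 2 * Re y \<le> -1 - K * l * (cmod y)^2) \<longrightarrow> False"
    using crux_list[of p c a] p1 cp a0 by auto
  have "\<exists>z::complex. z^p = (\<Sum>i<p. complex_of_real (\<alpha> i * l + \<beta> i) * z^i) \<and> 1 - K * l \<le> (cmod z)^2"
    if l: "0 < l" "l \<le> l0" for l
  proof -
    define d where "d k = c k - l * a k" for k
    define R where "R = (\<Sum>j\<le>p. monom (complex_of_real (d (p - j))) j)"
    have cR: "coeff R j = (if j \<le> p then complex_of_real (d (p - j)) else 0)" for j
      unfolding R_def by (simp add: coeff_sum coeff_monom)
    have d0: "d 0 = - l * a 0" unfolding d_def using c0 by simp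
    have d0nz: "d 0 \<noteq> 0" using d0 l a0 by simp
    have degR: "degree R = p"
    proof (rule antisym)
      show "degree R \<le> p" by (rule degree_le) (simp add: cR)
      show "p \<le> degree R" by (rule le_degree) (simp add: cR d0nz)
    qed
    have lcR: "lead_coeff R = complex_of_real (d 0)" using degR cR by simp
    obtain ys where ys: "length ys = p" "R = smult (lead_coeff R) (Qp ys)"
      using factorize[of R] degR by auto
    have ok: "coeffs_ok p c a l ys"
      unfolding coeffs_ok_def
    proof (intro conjI allI impI)
      show "length ys = p" by fact
      fix k assume k: "1 \<le> k \<and> k \<le> p"
      have "coeff R (p - k) = complex_of_real (d 0) * coeff (Qp ys) (p - k)"
        using ys(2) lcR by (metis coeff_smult)
      moreover have "coeff R (p - k) = complex_of_real (d k)" using cR k by simp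
      ultimately have "coeff (Qp ys) (p - k) = complex_of_real (d k / d 0)"
        using d0nz by (simp add: field_simps)
      moreover have "d k / d 0 = (c k - l * a k) / (- l * a 0)" by (simp only: d0) (simp add: d_def)
      ultimately show "coeff (Qp ys) (p - k) = complex_of_real ((c k - l * a k) / (- l * a 0))"
        by metis
    qed
    obtain y where y: "y \<in> set ys" "\<not> 2 * Re y \<le> -1 - K * l * (cmod y)^2"
      using KL ok l by blast
    have polyR: "poly R x = (\<Sum>j\<le>p. complex_of_real (d (p - j)) * x^j)" for x
      unfolding R_def by (simp add: poly_sum poly_monom)
    have "poly R y = 0" using ys(2) Qp_root[OF y(1)] by (metis mult_zero_right poly_smult)
    have "poly R 0 = 1"
    proof -
      have "poly R 0 = complex_of_real (d p)"
        unfolding polyR by (simp add: zero_power sum.atMost_shift del: sum.atMost_Suc)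
      then show ?thesis by (simp add: d_def cp ap)
    qed
    then have y0: "y \<noteq> 0" using \<open>poly R y = 0\<close> by auto
    define w where "w = 1 / y"
    have "poly R y = (\<Sum>k\<le>p. complex_of_real (d k) * y^(p - k))"
    proof -
      have "(\<Sum>j\<le>p. complex_of_real (d (p - j)) * y^j) = (\<Sum>j<Suc p. (\<lambda>k. complex_of_real (d k) * y^(p - k)) (Suc p - Suc j))"
        by (intro sum.cong) auto
      also have "\<dots> = (\<Sum>k<Suc p. complex_of_real (d k) * y^(p - k))"
        by (rule sum.nat_diff_reindex)
      finally show ?thesis unfolding polyR by (simp add: lessThan_Suc_atMost)
    qed
    also have "\<dots> = y^p * (\<Sum>k\<le>p. complex_of_real (d k) * w^k)"
      unfolding sum_distrib_left
    proof (intro sum.cong refl)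
      fix k assume "k \<in> {..p}"
      then have "y^p = y^(p-k) * y^k" by (simp add: power_add[symmetric])
      then show "complex_of_real (d k) * y^(p - k) = y^p * (complex_of_real (d k) * w^k)"
        using y0 by (simp add: w_def power_divide field_simps)
    qed
    also have "(\<Sum>k\<le>p. complex_of_real (d k) * w^k) = (1 + w)^p - (\<Sum>i<p. complex_of_real (\<alpha> i * l + \<beta> i) * (1 + w)^i)"
    proof -
      have "d k = real (p choose k) - (\<Sum>i<p. (\<alpha> i * l + \<beta> i) * real (i choose k))" for k
        unfolding d_def c_def a_def by (simp add: sum_distrib_left sum.distrib algebra_simps sum_subtractf)
      then show ?thesis using binom_expand[of p "\<lambda>i. \<alpha> i * l + \<beta> i" w] by simp
    qed
    finally have eq: "(1 + w)^p = (\<Sum>i<p. complex_of_real (\<alpha> i * l + \<beta> i) * (1 + w)^i)"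
      using \<open>poly R y = 0\<close> y0 by simp
    have "(cmod (1 + w))^2 * (cmod y)^2 = (cmod (y + 1))^2"
    proof -
      have "(1 + w) * y = y + 1" using y0 by (simp add: w_def field_simps)
      then show ?thesis by (metis norm_mult power_mult_distrib)
    qed
    also have "(cmod (y + 1))^2 = (cmod y)^2 + 2 * Re y + 1"
      unfolding cmod_power2 by (simp add: power2_eq_square algebra_simps)
    also have "\<dots> > (1 - K * l) * (cmod y)^2" using y(2) by (simp add: algebra_simps)
    finally have "(1 - K * l) * (cmod y)^2 < (cmod (1 + w))^2 * (cmod y)^2" .
    then have "1 - K * l \<le> (cmod (1 + w))^2" using y0
      by (metis less_eq_real_def mult_less_cancel_right zero_less_norm_iff zero_less_power)
    then show ?thesis using eq by blast
  qed
  then show ?thesis using K by blast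
qed

lemma mat_vec: "(mat c :: real^'n^'n) *v x = c *\<^sub>R x"
  unfolding vec_eq_iff matrix_vector_mult_def mat_def
  by (simp add: if_distrib[of "\<lambda>a. a * _"] cong: if_cong)

lemma mat_mul: "(mat a :: real^'n^'n) ** mat b = mat (a * b)"
  unfolding vec_eq_iff matrix_matrix_mult_def mat_def
  by (simp add: if_distrib[of "\<lambda>a. a * _"] cong: if_cong)

lemma matrix_inv_mat:
  assumes "c \<noteq> 0"
  shows "matrix_inv (mat c :: real^'n^'n) = mat (1 / c)"
proof -
  let ?A = "mat c :: real^'n^'n" and ?B = "mat (1/c) :: real^'n^'n"
  have AB: "?A ** ?B = mat 1" "?B ** ?A = mat 1" using assms by (simp_all add: mat_mul)
  have "?A ** matrix_inv ?A = mat 1 \<and> matrix_inv ?A ** ?A = mat 1"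
    unfolding matrix_inv_def by (rule someI[of _ ?B]) (use AB in auto)
  then have "matrix_inv ?A = matrix_inv ?A ** (?A ** ?B)" using AB by simp
  also have "\<dots> = ?B" by (simp add: matrix_mul_assoc \<open>?A ** matrix_inv ?A = mat 1 \<and> matrix_inv ?A ** ?A = mat 1\<close>)
  finally show ?thesis .
qed

lemma quad_grad_mat: "quad_grad (mat c) b x = c *\<^sub>R x + b"
  by (simp add: quad_grad_def mat_vec)

lemma quad_fun_mat: "quad_fun (mat c) b x = c / 2 * (x \<bullet> x) + b \<bullet> x"
  by (simp add: quad_fun_def mat_vec)

lemma quad_min_mat: "c \<noteq> 0 \<Longrightarrow> quad_min (mat c) b = - ((1 / c) *\<^sub>R b)"
  by (simp add: quad_min_def matrix_inv_mat mat_vec)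

lemma in_Fquad_mat:
  assumes "0 < c" "c \<le> l" "norm (quad_min (mat c) b) \<le> D"
  shows "in_Fquad l D (mat c :: real^'n^'n) b"
  unfolding in_Fquad_def
proof (intro conjI allI impI)
  show "transpose (mat c :: real^'n^'n) = mat c" by simp
  fix x :: "real^'n" assume "x \<noteq> 0"
  then show "0 < x \<bullet> (mat c *v x)" using assms by (simp add: mat_vec)
next
  show "l-lipschitz_on UNIV (quad_grad (mat c :: real^'n^'n) b)"
  proof (rule lipschitz_onI)
    fix x y :: "real^'n"
    have "dist (quad_grad (mat c) b x) (quad_grad (mat c) b y) = c * dist x y"
      using assms by (simp add: quad_grad_mat dist_norm scaleR_diff_right[symmetric])
    also have "\<dots> \<le> l * dist x y" using assms by (intro mult_right_mono) auto
    finally show "dist (quad_grad (mat c) b x) (quad_grad (mat c) b y) \<le> l * dist x y" .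
  qed (use assms in auto)
qed (use assms in auto)

lemma window_lin:
  fixes u :: "nat \<Rightarrow> real" and v :: "'a::real_vector"
  assumes p1: "p \<ge> 1"
    and rec: "\<And>n. u (n + p) = (\<Sum>i<p. (\<alpha> i * c + \<beta> i) * u (n + i))"
    and ini: "\<And>k. k < p \<Longrightarrow> init k = u (p - 1 - k) *\<^sub>R v"
  shows "j < p \<Longrightarrow> scli_window p \<alpha> \<beta> (\<lambda>x. c *\<^sub>R x) init t j = u (t + j) *\<^sub>R v"
proof (induction t arbitrary: j)
  case 0 then show ?case using ini[of "p - 1 - j"] by simp
next
  case (Suc t)
  show ?case
  proof (cases "j < p - 1")
    case True then show ?thesis using Suc by simp
  next
    case False
    then have j: "j = p - 1" using Suc by simp
    have "scli_window p \<alpha> \<beta> (\<lambda>x. c *\<^sub>R x) init (Suc t) j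
        = (\<Sum>i<p. \<alpha> i *\<^sub>R (c *\<^sub>R (u (t + i) *\<^sub>R v)) + \<beta> i *\<^sub>R (u (t + i) *\<^sub>R v))"
      using False Suc.IH by simp
    also have "\<dots> = (\<Sum>i<p. ((\<alpha> i * c + \<beta> i) * u (t + i)) *\<^sub>R v)"
      by (intro sum.cong refl) (simp add: algebra_simps)
    also have "\<dots> = u (t + p) *\<^sub>R v" by (simp add: rec scaleR_sum_left)
    finally show ?thesis using j p1 by simp
  qed
qed

lemma window_const:
  fixes y :: "'a::real_vector"
  assumes fp: "y = (\<Sum>i<p. \<alpha> i *\<^sub>R F y + \<beta> i *\<^sub>R y)"
    and ini: "\<And>k. k < p \<Longrightarrow> init k = y"
  shows "j < p \<Longrightarrow> scli_window p \<alpha> \<beta> F init t j = y"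
proof (induction t arbitrary: j)
  case 0 then show ?case using ini by simp
next
  case (Suc t)
  then show ?case using fp by simp
qed

lemma case_fixed:
  fixes l D :: real and p :: nat and alpha beta :: "nat \<Rightarrow> real" and b y :: "real^'n" and lam E :: real
  assumes "l > 0" "D > 0" "p \<ge> 1" "0 < lam" "lam \<le> l"
    and fp: "y = (\<Sum>i<p. alpha i *\<^sub>R quad_grad (mat lam) b y + beta i *\<^sub>R y)"
    and ny: "norm y \<le> D" and nm: "norm (quad_min (mat lam :: real^'n^'n) b) \<le> D"
    and E: "E = quad_fun (mat lam) b y - quad_fun (mat lam) b (quad_min (mat lam) b)" "E > 0"
  shows "\<exists>c TA. c > 0 \<and> TA > 0 \<and>
    (\<forall>T::nat. real T \<ge> TA \<longrightarrow>
      (\<exists>(S::real^'n^'n) b (init :: nat \<Rightarrow> real^'n).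
         in_Fquad l D S b \<and> (\<forall>k<p. norm (init k) \<le> D) \<and>
         (\<exists>T'\<in>{T..T + p - 1}.
            quad_fun S b (scli_iter p alpha beta (quad_grad S b) init T')
              - quad_fun S b (quad_min S b) \<ge> c * l * D\<^sup>2 / real T)))"
proof -
  define c where "c = E / (l * D^2)"
  have c0: "c > 0" using assms unfolding c_def by simp
  have main: "\<exists>(S::real^'n^'n) b (init :: nat \<Rightarrow> real^'n).
         in_Fquad l D S b \<and> (\<forall>k<p. norm (init k) \<le> D) \<and>
         (\<exists>T'\<in>{T..T + p - 1}.
            quad_fun S b (scli_iter p alpha beta (quad_grad S b) init T')
              - quad_fun S b (quad_min S b) \<ge> c * l * D\<^sup>2 / real T)"
    if T: "1 \<le> real T" for T :: nat
  proof -
    have it: "scli_iter p alpha beta (quad_grad (mat lam) b) (\<lambda>k. y) T = y"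
      unfolding scli_iter_def using window_const[where F="quad_grad (mat lam) b" and init="\<lambda>k. y" and j="p - 1" and t=T, OF fp] assms by simp
    have "c * l * D^2 / real T = E / real T" unfolding c_def using assms by simp
    also have "\<dots> \<le> E" using T E(2) by (simp add: divide_le_eq)
    finally have "c * l * D^2 / real T \<le> E" .
    then show ?thesis
      using in_Fquad_mat[OF assms(4,5) nm] ny it E(1) assms(3)
      by (intro exI[of _ "mat lam"] exI[of _ b] exI[of _ "\<lambda>k. y"] conjI bexI[of _ T]) auto
  qed
  show ?thesis using c0 main by (intro exI[of _ c] exI[of _ "1::real"]) auto
qed

lemma case_inconsistent:
  fixes l D :: real and p :: nat and alpha beta :: "nat \<Rightarrow> real"
  assumes "l > 0" "D > 0" "p \<ge> 1" and sb: "(\<Sum>i<p. beta i) \<noteq> 1"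
  shows "\<exists>c TA. c > 0 \<and> TA > 0 \<and>
    (\<forall>T::nat. real T \<ge> TA \<longrightarrow>
      (\<exists>(S::real^'n^'n) b (init :: nat \<Rightarrow> real^'n).
         in_Fquad l D S b \<and> (\<forall>k<p. norm (init k) \<le> D) \<and>
         (\<exists>T'\<in>{T..T + p - 1}.
            quad_fun S b (scli_iter p alpha beta (quad_grad S b) init T')
              - quad_fun S b (quad_min S b) \<ge> c * l * D\<^sup>2 / real T)))"
proof -
  obtain i0 :: 'n where True by blast
  define v :: "real^'n" where "v = axis i0 1"
  have nv: "norm v = 1" "v \<bullet> v = 1" unfolding v_def by (simp_all add: inner_axis_axis)
  define sa where "sa = (\<Sum>i<p. alpha i)"
  define sbb where "sbb = (\<Sum>i<p. beta i)"
  define g where "g = 1 - sbb - l * sa"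
  have sumv: "(\<Sum>i<p. alpha i *\<^sub>R (r *\<^sub>R v) + beta i *\<^sub>R (q *\<^sub>R v)) = (sa * r + sbb * q) *\<^sub>R v" for r q
  proof -
    have "(\<Sum>i<p. alpha i *\<^sub>R (r *\<^sub>R v) + beta i *\<^sub>R (q *\<^sub>R v)) = (\<Sum>i<p. (alpha i * r + beta i * q) *\<^sub>R v)"
      by (intro sum.cong) (simp_all add: algebra_simps)
    also have "\<dots> = (\<Sum>i<p. alpha i * r + beta i * q) *\<^sub>R v" by (simp add: scaleR_sum_left)
    also have "(\<Sum>i<p. alpha i * r + beta i * q) = sa * r + sbb * q"
      unfolding sa_def sbb_def by (simp add: sum.distrib sum_distrib_right)
    finally show ?thesis .
  qed
  show ?thesis
  proof (cases "g = 0")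
    case True
    define y where "y = D *\<^sub>R v"
    have qm: "quad_min (mat l :: real^'n^'n) 0 = 0" using assms by (simp add: quad_min_mat)
    have fp: "y = (\<Sum>i<p. alpha i *\<^sub>R quad_grad (mat l) 0 y + beta i *\<^sub>R y)"
    proof -
      have "(\<Sum>i<p. alpha i *\<^sub>R quad_grad (mat l) 0 y + beta i *\<^sub>R y)
          = (\<Sum>i<p. alpha i *\<^sub>R ((l * D) *\<^sub>R v) + beta i *\<^sub>R (D *\<^sub>R v))"
        by (simp add: quad_grad_mat y_def)
      also have "\<dots> = (sa * (l * D) + sbb * D) *\<^sub>R v" by (rule sumv)
      also have "sa * (l * D) + sbb * D = D"
      proof -
        have "sbb + l * sa = 1" using True g_def by simp
        then have "D * (sbb + l * sa) = D" by simp
        then show ?thesis by (simp add: algebra_simps)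
      qed
      finally show ?thesis by (simp add: y_def)
    qed
    show ?thesis
      by (rule case_fixed[OF assms(1-3) assms(1) order_refl fp, of "l / 2 * D^2"])
         (use assms nv qm in \<open>auto simp: y_def quad_fun_mat power2_eq_square\<close>)
  next
    case False
    define \<theta> where "\<theta> = D / (1 + \<bar>l * sa / g\<bar>)"
    define \<xi> where "\<xi> = - (l * sa * \<theta>) / g"
    define b where "b = (- (l * \<theta>)) *\<^sub>R v"
    define y where "y = \<xi> *\<^sub>R v"
    have th0: "\<theta> > 0" unfolding \<theta>_def using assms by (simp add: add_pos_nonneg)
    have thD: "\<theta> * (1 + \<bar>l * sa / g\<bar>) = D"
    proof -
      have "1 + \<bar>l * sa / g\<bar> > 0" by (simp add: add_pos_nonneg)
      then show ?thesis unfolding \<theta>_def by simp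
    qed
    have qm: "quad_min (mat l :: real^'n^'n) b = \<theta> *\<^sub>R v" using assms by (simp add: quad_min_mat b_def)
    have xg: "\<xi> * g = - (l * sa * \<theta>)" unfolding \<xi>_def using False by simp
    have fp: "y = (\<Sum>i<p. alpha i *\<^sub>R quad_grad (mat l) b y + beta i *\<^sub>R y)"
    proof -
      have "(\<Sum>i<p. alpha i *\<^sub>R quad_grad (mat l) b y + beta i *\<^sub>R y) = (sa * (l * \<xi> - l * \<theta>) + sbb * \<xi>) *\<^sub>R v"
        unfolding quad_grad_mat y_def b_def using sumv[of "l * \<xi> - l * \<theta>" \<xi>]
        by (simp add: algebra_simps)
      also have "sa * (l * \<xi> - l * \<theta>) + sbb * \<xi> = \<xi>"
        using xg unfolding g_def by (simp add: algebra_simps)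
      finally show ?thesis by (simp add: y_def)
    qed
    have ny: "norm y \<le> D"
    proof -
      have "norm y = \<bar>l * sa / g\<bar> * \<theta>" unfolding y_def \<xi>_def using nv th0 by (simp add: abs_mult abs_divide)
      also have "\<dots> \<le> D" using thD th0 by (simp add: algebra_simps)
      finally show ?thesis .
    qed
    have "\<theta> * 1 \<le> \<theta> * (1 + \<bar>l * sa / g\<bar>)" using th0 by (intro mult_left_mono) auto
    then have "\<theta> \<le> D" using thD by simp
    then have nm: "norm (quad_min (mat l :: real^'n^'n) b) \<le> D" using qm nv th0 by simp
    have E: "quad_fun (mat l) b y - quad_fun (mat l) b (quad_min (mat l) b) = l / 2 * (\<xi> - \<theta>)^2"
      unfolding qm unfolding quad_fun_mat y_def b_def using nv by (simp add: power2_eq_square algebra_simps)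
    have "\<xi> \<noteq> \<theta>"
    proof
      assume "\<xi> = \<theta>"
      then have "\<theta> * g = - (l * sa * \<theta>)" using xg by simp
      then have "\<theta> * (1 - sbb) = 0" unfolding g_def by (simp add: algebra_simps)
      then show False using th0 sb sbb_def by simp
    qed
    then have "l / 2 * (\<xi> - \<theta>)^2 > 0" using assms by simp
    then show ?thesis
      by (rule case_fixed[OF assms(1-3) assms(1) order_refl fp ny nm E[symmetric]])
  qed
qed

lemma case_consistent:
  fixes l D :: real and p :: nat and alpha beta :: "nat \<Rightarrow> real"
  assumes l0: "l > 0" and D0: "D > 0" and p1: "p \<ge> 1" and sb: "(\<Sum>i<p. beta i) = 1"
  shows "\<exists>c TA. c > 0 \<and> TA > 0 \<and>
    (\<forall>T::nat. real T \<ge> TA \<longrightarrow>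
      (\<exists>(S::real^'n^'n) b (init :: nat \<Rightarrow> real^'n).
         in_Fquad l D S b \<and> (\<forall>k<p. norm (init k) \<le> D) \<and>
         (\<exists>T'\<in>{T..T + p - 1}.
            quad_fun S b (scli_iter p alpha beta (quad_grad S b) init T')
              - quad_fun S b (quad_min S b) \<ge> c * l * D\<^sup>2 / real T)))"
proof -
  obtain i0 :: 'n where True by blast
  define v :: "real^'n" where "v = axis i0 1"
  have nv: "norm v = 1" "v \<bullet> v = 1" unfolding v_def by (simp_all add: inner_axis_axis)
  obtain K lz where K: "K > 0" "lz > 0" and RT: "\<forall>lam. 0 < lam \<and> lam \<le> lz \<longrightarrow>
    (\<exists>z::complex. z^p = (\<Sum>i<p. complex_of_real (alpha i * lam + beta i) * z^i) \<and> 1 - K * lam \<le> (cmod z)^2)"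
    using root_exists[OF p1 sb, of alpha] by blast
  define l1 where "l1 = min lz (min l (1 / (2 * K)))"
  have l1a: "l1 > 0" "l1 \<le> lz" "l1 \<le> l" "l1 \<le> 1 / (2 * K)"
    unfolding l1_def using K l0 by auto
  have "K * l1 \<le> K * (1 / (2 * K))" using l1a K by (intro mult_left_mono) auto
  then have l1: "l1 > 0" "l1 \<le> lz" "l1 \<le> l" "K * l1 \<le> 1/2" using l1a K by auto
  define c where "c = l1 / (8 * 4^p * l)"
  have c0: "c > 0" unfolding c_def using l1 l0 by simp
  have main: "\<exists>(S::real^'n^'n) b (init :: nat \<Rightarrow> real^'n).
         in_Fquad l D S b \<and> (\<forall>k<p. norm (init k) \<le> D) \<and>
         (\<exists>T'\<in>{T..T + p - 1}.
            quad_fun S b (scli_iter p alpha beta (quad_grad S b) init T')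
              - quad_fun S b (quad_min S b) \<ge> c * l * D\<^sup>2 / real T)"
    if T: "1 \<le> real T" for T :: nat
  proof -
    define lam where "lam = l1 / real T"
    have T0: "real T > 0" using T by simp
    have lam: "lam > 0" "lam \<le> l1"
      unfolding lam_def using l1 T by (auto simp: divide_le_eq)
    obtain z :: complex where z: "z^p = (\<Sum>i<p. complex_of_real (alpha i * lam + beta i) * z^i)"
      "1 - K * lam \<le> (cmod z)^2"
      using RT lam l1 by auto
    have Kl: "K * lam \<le> 1/2" using lam l1 K by (smt (verit) mult_left_mono)
    have z2: "(cmod z)^2 \<ge> 1/2" using z(2) Kl by linarith
    have zh: "cmod z \<ge> 1/2"
    proof (rule ccontr)
      assume "\<not> cmod z \<ge> 1/2"
      then have "(cmod z)^2 < (1/2)^2" by (intro power_strict_mono) auto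
      then show False using z2 by (simp add: power2_eq_square)
    qed
    have znz: "z \<noteq> 0" using zh by auto
    have pw: "((cmod z)^2)^T \<ge> 1/2"
    proof -
      have "1 + real T * (- (K * lam)) \<le> (1 + - (K * lam))^T"
        by (rule Bernoulli_inequality) (use Kl in linarith)
      moreover have "real T * (K * lam) = K * l1" unfolding lam_def using T0 by simp
      moreover have "(1 + - (K * lam))^T \<le> ((cmod z)^2)^T"
        by (rule power_mono) (use z(2) Kl in linarith)+
      ultimately show ?thesis using l1 by linarith
    qed
    define w where "w = z^T"
    have w2: "(cmod w)^2 \<ge> 1/2" unfolding w_def using pw
      by (simp add: norm_power power_mult[symmetric] mult.commute)
    obtain \<omega>0 :: complex where om: "cmod \<omega>0 = 1" "(Re (\<omega>0 * w))^2 \<ge> 1/4"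
    proof (cases "(Re w)^2 \<ge> (cmod w)^2 / 2")
      case True
      then show ?thesis using that[of 1] w2 by simp
    next
      case False
      have "(cmod w)^2 = (Re w)^2 + (Im w)^2" by (rule cmod_power2)
      then have "(Im w)^2 \<ge> 1/4" using False w2 by linarith
      then show ?thesis using that[of "- \<i>"] by simp
    qed
    define \<gamma> where "\<gamma> = D / 2^p"
    define \<omega> where "\<omega> = \<omega>0 / z^(p - 1)"
    define u where "u n = \<gamma> * Re (\<omega> * z^n)" for n
    have rec: "u (n + p) = (\<Sum>i<p. (alpha i * lam + beta i) * u (n + i))" for n
    proof -
      have "\<omega> * z^(n + p) = (\<Sum>i<p. complex_of_real (alpha i * lam + beta i) * (\<omega> * z^(n + i)))"
        by (simp add: power_add z(1) sum_distrib_left algebra_simps)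
      then have "Re (\<omega> * z^(n + p)) = (\<Sum>i<p. (alpha i * lam + beta i) * Re (\<omega> * z^(n + i)))"
        by (simp add: Re_sum)
      then show ?thesis unfolding u_def by (simp add: sum_distrib_left algebra_simps)
    qed
    define init where "init k = u (p - 1 - k) *\<^sub>R v" for k
    have gq: "quad_grad (mat lam :: real^'n^'n) 0 = (\<lambda>x. lam *\<^sub>R x)"
      by (simp add: quad_grad_mat fun_eq_iff)
    have it: "scli_iter p alpha beta (quad_grad (mat lam) 0) init T = u (T + (p - 1)) *\<^sub>R v"
      unfolding scli_iter_def gq using window_lin[of p u alpha lam beta init v "p - 1" T] p1 rec init_def by simp
    have uT: "u (T + (p - 1)) = \<gamma> * Re (\<omega>0 * w)"
      unfolding u_def \<omega>_def w_def using znz by (simp add: power_add)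
    have ninit: "norm (init k) \<le> D" if k: "k < p" for k
    proof -
      have "norm (init k) = \<bar>u (p - 1 - k)\<bar>" unfolding init_def using nv by simp
      also have "\<dots> \<le> \<gamma> * cmod (\<omega> * z^(p - 1 - k))"
      proof -
        have "\<gamma> \<ge> 0" using D0 by (simp add: \<gamma>_def)
        then have "\<gamma> * \<bar>Re (\<omega> * z^(p - 1 - k))\<bar> \<le> \<gamma> * cmod (\<omega> * z^(p - 1 - k))"
          by (intro mult_left_mono abs_Re_le_cmod) auto
        then show ?thesis unfolding u_def using \<open>\<gamma> \<ge> 0\<close> by (simp only: abs_mult abs_of_nonneg)
      qed
      also have "cmod (\<omega> * z^(p - 1 - k)) = 1 / (cmod z)^k"
      proof -
        have "z^(p - 1) = z^(p - 1 - k) * z^k" using k by (simp add: power_add[symmetric])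
        then show ?thesis unfolding \<omega>_def using znz om(1) by (simp add: norm_divide norm_mult norm_power)
      qed
      also have "1 / (cmod z)^k \<le> 2^p"
      proof -
        have "(1/2)^k \<le> (cmod z)^k" by (rule power_mono) (use zh in auto)
        moreover have "(cmod z)^k > 0" using znz by simp
        ultimately have "1 / (cmod z)^k \<le> 2^k" by (simp add: field_simps power_divide)
        also have "(2::real)^k \<le> 2^p" using k by (intro power_increasing) auto
        finally show ?thesis .
      qed
      finally show ?thesis
        using D0 by (simp add: \<gamma>_def mult_left_mono field_simps)
    qed
    have qm: "quad_min (mat lam :: real^'n^'n) 0 = 0" using lam by (simp add: quad_min_mat)
    define r where "r = Re (\<omega>0 * w)"
    have xT: "scli_iter p alpha beta (quad_grad (mat lam) 0) init T = (\<gamma> * r) *\<^sub>R v"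
      using it uT r_def by simp
    have g2: "\<gamma>^2 = D^2 / 4^p" unfolding \<gamma>_def
      by (simp add: power_divide power_mult[symmetric] mult.commute[of p] power_mult)
    have "c * l * D^2 / real T = lam / 2 * \<gamma>^2 * (1/4)"
      unfolding c_def lam_def g2 using l0 by (simp add: field_simps)
    also have "\<dots> \<le> lam / 2 * \<gamma>^2 * r^2"
      using om(2) lam by (intro mult_left_mono) (auto simp: r_def)
    also have "\<dots> = quad_fun (mat lam) 0 (scli_iter p alpha beta (quad_grad (mat lam) 0) init T)
              - quad_fun (mat lam) 0 (quad_min (mat lam :: real^'n^'n) 0)"
      using nv lam by (simp add: xT qm quad_fun_mat power2_eq_square algebra_simps)
    finally have fin: "c * l * D^2 / real T \<le> quad_fun (mat lam) 0 (scli_iter p alpha beta (quad_grad (mat lam) 0) init T)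
              - quad_fun (mat lam) 0 (quad_min (mat lam :: real^'n^'n) 0)" .
    have inF: "in_Fquad l D (mat lam :: real^'n^'n) 0"
      by (rule in_Fquad_mat) (use lam l1 D0 qm in auto)
    show ?thesis
      using inF ninit fin p1
      by (intro exI[of _ "mat lam"] exI[of _ "0::real^'n"] exI[of _ init] conjI bexI[of _ T]) auto
  qed
  show ?thesis using c0 main by (intro exI[of _ c] exI[of _ "1::real"]) auto
qed

theorem proposition30:
  fixes l D :: real and p :: nat and alpha beta :: "nat \<Rightarrow> real"
  assumes "l > 0" and "D > 0" and "p \<ge> 1"
  shows "\<exists>c TA. c > 0 \<and> TA > 0 \<and>
    (\<forall>T::nat. real T \<ge> TA \<longrightarrow>
      (\<exists>(S::real^'n^'n) b (init :: nat \<Rightarrow> real^'n).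
         in_Fquad l D S b \<and> (\<forall>k<p. norm (init k) \<le> D) \<and>
         (\<exists>T'\<in>{T..T + p - 1}.
            quad_fun S b (scli_iter p alpha beta (quad_grad S b) init T')
              - quad_fun S b (quad_min S b) \<ge> c * l * D\<^sup>2 / real T)))"
proof (cases "(\<Sum>i<p. beta i) = 1")
  case True
  then show ?thesis using case_consistent[OF assms True] by blast
next
  case False
  then show ?thesis using case_inconsistent[OF assms False] by blast
qed

end
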